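(* Let $N\geq 1$ be an integer and let $k_N=\dfrac{1}{2^{N+4}}$. Let $(X,Y;E)$ be a finite bipartite graph (so $X,Y$ are finite disjoint sets and $E\subseteq X\times Y$) which has VC-minimal complexity $<N$. Then there exist $X'\subseteq X$ and $Y'\subseteq Y$ with $|X'|\geq k_N|X|$ and $|Y'|\geq k_N|Y|$ such that either $X'\times Y'\subseteq E$ or $(X'\times Y')\cap E=\emptyset$.
   Context: For $a\in X$ and $S\subseteq Y$ write $E(a,S)=\{b\in S:(a,b)\in E\}$. A family $\Psi$ of subsets of a set $U$ is a directed family if for any $B,B'\in\Psi$ one has $B\subseteq B'$ or $B'\subseteq B$ or $B\cap B'=\emptyset$; members of $\Psi$ are called $\Psi$-balls. A $\Psi$-Swiss cheese is a set of the form $B\setminus(B_1\cup\dots\cup B_n)$ with $B,B_1,\dots,B_n$ $\Psi$-balls ($n\ge 0$); $B$ is its outer ball and the $B_i$ are its holes. The bipartite graph $(X,Y;E)$ has VC-minimal complexity $<N$ if there is a directed family $\Psi$ of subsets of $Y$ such that for every $a\in X$, $E(a,Y)$ is a finite disjoint union of $\Psi$-Swiss cheeses $E(a,Y)=\dot\bigcup_{k=1}^{s}\big(B_{k1}\setminus(B_{k2}\cup\dots\cup B_{kd(k)})\big)$ in which the total number of outer balls plus holes satisfies $d(1)+\dots+d(s)<N$ (an empty union, $s=0$, is allowed). *)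

theory Defs
  imports Complex_Main
begin

definition nbhd :: "('a \<times> 'b) set \<Rightarrow> 'a \<Rightarrow> 'b set \<Rightarrow> 'b set" where
  "nbhd E a S = {b \<in> S. (a, b) \<in> E}"

definition directed_family :: "'b set \<Rightarrow> 'b set set \<Rightarrow> bool" where
  "directed_family U \<Psi> \<longleftrightarrow> (\<forall>B\<in>\<Psi>. B \<subseteq> U) \<and>
     (\<forall>B\<in>\<Psi>. \<forall>B'\<in>\<Psi>. B \<subseteq> B' \<or> B' \<subseteq> B \<or> B \<inter> B' = {})"

text \<open>A Swiss cheese given as a nonempty list of balls: the head is the outer ball,
  the tail lists the holes.\<close>
definition cheese :: "'b set list \<Rightarrow> 'b set" where
  "cheese c = hd c - \<Union>(set (tl c))"

text \<open>VC-minimal complexity < N: E(a,Y) is a disjoint union of s Psi-Swiss cheeses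
  (cheese k given by the list cs!k = [B_k1, ..., B_k d(k)]) with d(1)+...+d(s) < N.\<close>
definition vc_minimal_complexity_lt ::
  "'a set \<Rightarrow> 'b set \<Rightarrow> ('a \<times> 'b) set \<Rightarrow> nat \<Rightarrow> bool" where
  "vc_minimal_complexity_lt X Y E N \<longleftrightarrow>
    (\<exists>\<Psi>. directed_family Y \<Psi> \<and>
      (\<forall>a\<in>X. \<exists>cs :: 'b set list list.
          (\<forall>c\<in>set cs. c \<noteq> [] \<and> set c \<subseteq> \<Psi>) \<and>
          (\<forall>i<length cs. \<forall>j<length cs. i \<noteq> j \<longrightarrow> cheese (cs!i) \<inter> cheese (cs!j) = {}) \<and>
          nbhd E a Y = (\<Union>i<length cs. cheese (cs!i)) \<and>
          (\<Sum>i<length cs. length (cs!i)) < N))"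

end

theory Submission
  imports Defs
begin

lemma laminar_order:
  fixes Y :: "'b set" and \<Psi> :: "'b set set"
  assumes "finite Y" and lam: "\<forall>B\<in>\<Psi>. \<forall>B'\<in>\<Psi>. B \<subseteq> B' \<or> B' \<subseteq> B \<or> B \<inter> B' = {}"
  shows "\<exists>f::'b \<Rightarrow> int. inj_on f Y \<and>
    (\<forall>B\<in>\<Psi>. \<forall>x\<in>B\<inter>Y. \<forall>z\<in>B\<inter>Y. \<forall>y\<in>Y. f x \<le> f y \<longrightarrow> f y \<le> f z \<longrightarrow> y \<in> B)"
  using assms(1)
proof (induction Y rule: finite_induct)
  case empty
  show ?case by auto
next
  case (insert y0 Y0)
  obtain f :: "'b \<Rightarrow> int" where inj: "inj_on f Y0" and
    conv: "\<forall>B\<in>\<Psi>. \<forall>x\<in>B\<inter>Y0. \<forall>z\<in>B\<inter>Y0. \<forall>y\<in>Y0. f x \<le> f y \<longrightarrow> f y \<le> f z \<longrightarrow> y \<in> B"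
    using insert.IH by blast
  have convR: "y \<in> B" if "B\<in>\<Psi>" "x\<in>B" "x\<in>Y0" "z\<in>B" "z\<in>Y0" "y\<in>Y0" "f x \<le> f y" "f y \<le> f z" for B x y z
    using conv that by blast
  have maxex: "\<exists>l\<in>S. \<forall>z\<in>S. f z \<le> f l" if "finite S" "S \<noteq> {}" for S
  proof -
    have "Max (f ` S) \<in> f ` S" using that by simp
    then obtain l where "l \<in> S" "f l = Max (f ` S)" by force
    then show ?thesis using that by (metis Max_ge finite_imageI imageI)
  qed
  have "\<exists>l. (Y0 \<noteq> {} \<longrightarrow> l \<in> Y0) \<and> (\<forall>B\<in>\<Psi>. y0\<in>B \<and> B\<inter>Y0\<noteq>{} \<longrightarrow> l\<in>B) \<and> (\<forall>B\<in>\<Psi>. y0\<notin>B \<and> l\<in>B \<longrightarrow> (\<forall>z\<in>B\<inter>Y0. f z \<le> f l))"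
  proof (cases "\<exists>B\<in>\<Psi>. y0\<in>B \<and> B\<inter>Y0\<noteq>{}")
    case False
    note nC = this
    show ?thesis
    proof (cases "Y0 = {}")
      case True
      then show ?thesis by simp
    next
      case False
      from maxex[OF insert.hyps(1) False] obtain l where l: "l \<in> Y0" "\<forall>z\<in>Y0. f z \<le> f l" by blast
      have "\<forall>B\<in>\<Psi>. y0\<in>B \<and> B\<inter>Y0\<noteq>{} \<longrightarrow> l\<in>B" using nC by blast
      moreover have "\<forall>B\<in>\<Psi>. y0\<notin>B \<and> l\<in>B \<longrightarrow> (\<forall>z\<in>B\<inter>Y0. f z \<le> f l)" using l(2) by simp
      ultimately show ?thesis using l(1) by blast
    qed
  next
    case True
    then obtain B0 where B0: "B0\<in>\<Psi> \<and> y0\<in>B0 \<and> B0\<inter>Y0\<noteq>{}" by blast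
    from ex_has_least_nat[of "\<lambda>B. B\<in>\<Psi> \<and> y0\<in>B \<and> B\<inter>Y0\<noteq>{}" B0 "\<lambda>B. card (B \<inter> Y0)", OF B0]
    obtain C1 where C1: "C1\<in>\<Psi> \<and> y0\<in>C1 \<and> C1\<inter>Y0\<noteq>{}"
      and C1min: "\<forall>B. B\<in>\<Psi> \<and> y0\<in>B \<and> B\<inter>Y0\<noteq>{} \<longrightarrow> card (C1 \<inter> Y0) \<le> card (B \<inter> Y0)"
      by blast
    have fin1: "finite (C1 \<inter> Y0)" using insert.hyps(1) by simp
    from maxex[OF fin1] C1 obtain l where l: "l \<in> C1 \<inter> Y0" "\<forall>z\<in>C1 \<inter> Y0. f z \<le> f l"
      by blast
    have P1: "l \<in> B" if "B\<in>\<Psi>" "y0\<in>B" "B\<inter>Y0\<noteq>{}" for B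
    proof -
      have "B \<inter> C1 \<noteq> {}" using that C1 by blast
      moreover have "B \<subseteq> C1 \<or> C1 \<subseteq> B \<or> B \<inter> C1 = {}" using lam that(1) C1 by blast
      ultimately have "B \<subseteq> C1 \<or> C1 \<subseteq> B" by blast
      then show ?thesis
      proof
        assume "B \<subseteq> C1"
        then have sub: "B \<inter> Y0 \<subseteq> C1 \<inter> Y0" by blast
        moreover have "card (C1 \<inter> Y0) \<le> card (B \<inter> Y0)" using C1min that by blast
        ultimately have "B \<inter> Y0 = C1 \<inter> Y0" using fin1 card_seteq by blast
        then show ?thesis using l by blast
      next
        assume "C1 \<subseteq> B" then show ?thesis using l by blast
      qed
    qed
    have P2: "\<forall>z\<in>B\<inter>Y0. f z \<le> f l" if "B\<in>\<Psi>" "y0\<notin>B" "l\<in>B" for B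
    proof -
      have "B \<inter> C1 \<noteq> {}" using that l by blast
      moreover have "\<not> C1 \<subseteq> B" using that C1 by blast
      moreover have "B \<subseteq> C1 \<or> C1 \<subseteq> B \<or> B \<inter> C1 = {}" using lam that(1) C1 by blast
      ultimately have "B \<subseteq> C1" by blast
      then show ?thesis using l by blast
    qed
    show ?thesis using P1 P2 l(1) by blast
  qed
  then obtain l where lp: "(Y0 \<noteq> {} \<longrightarrow> l \<in> Y0) \<and> (\<forall>B\<in>\<Psi>. y0\<in>B \<and> B\<inter>Y0\<noteq>{} \<longrightarrow> l\<in>B) \<and> (\<forall>B\<in>\<Psi>. y0\<notin>B \<and> l\<in>B \<longrightarrow> (\<forall>z\<in>B\<inter>Y0. f z \<le> f l))"
    by (rule exE)
  have l0: "Y0 \<noteq> {} \<Longrightarrow> l \<in> Y0" using lp by simp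
  have P1: "\<And>B. B\<in>\<Psi> \<Longrightarrow> y0\<in>B \<Longrightarrow> B\<inter>Y0\<noteq>{} \<Longrightarrow> l\<in>B" using lp by simp
  have P2: "\<And>B z. B\<in>\<Psi> \<Longrightarrow> y0\<notin>B \<Longrightarrow> l\<in>B \<Longrightarrow> z\<in>B\<inter>Y0 \<Longrightarrow> f z \<le> f l" using lp by simp
  define g where "g y = (if y = y0 then 2 * f l + 1 else 2 * f y)" for y
  have "inj_on g (insert y0 Y0)"
  proof (rule inj_onI)
    fix x y assume xy: "x \<in> insert y0 Y0" "y \<in> insert y0 Y0" "g x = g y"
    show "x = y"
    proof (cases "x = y0"; cases "y = y0")
      assume "x \<noteq> y0" "y \<noteq> y0"
      then show ?thesis using xy inj unfolding g_def by (simp add: inj_on_def)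
    next
      assume "x = y0" "y \<noteq> y0"
      then have "2 * f l + 1 = 2 * f y" using xy unfolding g_def by simp
      then have False by presburger
      then show ?thesis ..
    next
      assume "x \<noteq> y0" "y = y0"
      then have "2 * f x = 2 * f l + 1" using xy unfolding g_def by simp
      then have False by presburger
      then show ?thesis ..
    qed simp
  qed
  moreover have "\<forall>B\<in>\<Psi>. \<forall>x\<in>B\<inter>insert y0 Y0. \<forall>z\<in>B\<inter>insert y0 Y0. \<forall>y\<in>insert y0 Y0.
      g x \<le> g y \<longrightarrow> g y \<le> g z \<longrightarrow> y \<in> B"
  proof (intro ballI impI)
    fix B x z y assume B: "B \<in> \<Psi>" and x: "x\<in>B\<inter>insert y0 Y0" and z: "z\<in>B\<inter>insert y0 Y0"
      and y: "y\<in>insert y0 Y0" and le1: "g x \<le> g y" and le2: "g y \<le> g z"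
    show "y \<in> B"
    proof (cases "y = y0")
      case True
      show ?thesis
      proof (cases "x = y0 \<or> z = y0")
        case True then show ?thesis using x z \<open>y = y0\<close> by blast
      next
        case False
        then have xz: "x \<in> B \<inter> Y0" "z \<in> B \<inter> Y0" using x z by auto
        have "f x \<le> f l" "f l < f z" using le1 le2 False \<open>y = y0\<close> unfolding g_def by auto
        show ?thesis
        proof (rule ccontr)
          assume "y \<notin> B"
          then have "y0 \<notin> B" using \<open>y = y0\<close> by simp
          show False
          proof (cases "l \<in> B")
            case True
            then show False using P2[OF B \<open>y0 \<notin> B\<close> True xz(2)] \<open>f l < f z\<close> by simp
          next
            case False
            have "l \<in> Y0" using l0 xz by blast
            then have "l \<in> B" using convR[OF B IntD1[OF xz(1)] IntD2[OF xz(1)] IntD1[OF xz(2)] IntD2[OF xz(2)] _ \<open>f x \<le> f l\<close> less_imp_le[OF \<open>f l < f z\<close>]] by blast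
            then show False using False by simp
          qed
        qed
      qed
    next
      case False
      then have yY: "y \<in> Y0" using y by simp
      show ?thesis
      proof (cases "x = y0"; cases "z = y0")
        assume "x \<noteq> y0" "z \<noteq> y0"
        then have "f x \<le> f y" "f y \<le> f z" using le1 le2 False unfolding g_def by auto
        then show ?thesis using convR[of B x z y] B x z yY \<open>x \<noteq> y0\<close> \<open>z \<noteq> y0\<close> by blast
      next
        assume "x = y0" "z \<noteq> y0"
        then have "l \<in> B" using P1 B x z by blast
        moreover have "f l \<le> f y" "f y \<le> f z" using le1 le2 False \<open>x = y0\<close> \<open>z \<noteq> y0\<close> unfolding g_def by auto
        moreover have "l \<in> Y0" using l0 z \<open>z \<noteq> y0\<close> by blast
        ultimately show ?thesis using convR[of B l z y] B z yY \<open>z \<noteq> y0\<close> by blast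
      next
        assume "x \<noteq> y0" "z = y0"
        then have "l \<in> B" using P1 B x z by blast
        moreover have "f x \<le> f y" "f y \<le> f l" using le1 le2 False \<open>x \<noteq> y0\<close> \<open>z = y0\<close> unfolding g_def by auto
        moreover have "l \<in> Y0" using l0 x \<open>x \<noteq> y0\<close> by blast
        ultimately show ?thesis using convR[of B x l y] B x yY \<open>x \<noteq> y0\<close> by blast
      next
        assume "x = y0" "z = y0"
        then have "2 * f l + 1 \<le> 2 * f y" "2 * f y \<le> 2 * f l + 1" using le1 le2 False unfolding g_def by auto
        then have False by presburger
        then show ?thesis ..
      qed
    qed
  qed
  ultimately show ?case by (intro exI[of _ g] conjI)
qed



lemma realfrac:
  fixes n c N :: nat
  assumes "n \<le> 2^(N+4) * c"
  shows "(1 / 2^(N+4)) * real n \<le> real c"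
proof -
  have "real n \<le> 2^(N+4) * real c"
    using assms by (metis of_nat_le_iff of_nat_mult of_nat_numeral of_nat_power)
  then show ?thesis by (simp add: field_simps)
qed

lemma fourN: "4 * N \<le> (2::nat)^(N+4)"
proof -
  have "N < 2^N" by (rule less_exp)
  moreover have "(2::nat)^(N+4) = 16 * 2^N" by (simp add: power_add)
  ultimately show ?thesis by linarith
qed

lemma div_range:
  fixes s i j :: nat
  assumes "0 < s"
  shows "i div s = j \<longleftrightarrow> j*s \<le> i \<and> i < j*s + s"
proof
  assume h: "i div s = j"
  have "i div s * s \<le> i" by (rule div_times_less_eq_dividend)
  moreover have "i < s + i div s * s" using assms by (rule dividend_less_div_times)
  ultimately show "j*s \<le> i \<and> i < j*s + s" using h by simp
next
  assume h: "j*s \<le> i \<and> i < j*s + s"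
  show "i div s = j"
  proof (rule div_nat_eqI)
    show "s * j \<le> i" using h by (simp add: mult.commute)
    show "i < s * Suc j" using h by (simp add: mult.commute)
  qed
qed

lemma halving:
  assumes "finite X0" "y1 \<in> Y'"
    and "\<forall>a\<in>X0. \<forall>y\<in>Y'. (a,y) \<in> E \<longleftrightarrow> (a,y1) \<in> E"
  shows "\<exists>X'. X' \<subseteq> X0 \<and> card X0 \<le> 2 * card X' \<and> (X' \<times> Y' \<subseteq> E \<or> (X' \<times> Y') \<inter> E = {})"
proof -
  define X1 where "X1 = {a\<in>X0. (a,y1) \<in> E}"
  define X2 where "X2 = X0 - X1"
  have "card X1 + card X2 = card X0"
    unfolding X2_def using assms(1) X1_def
    by (metis (no_types, lifting) card_Diff_subset card_mono finite_subset le_add_diff_inverse mem_Collect_eq subsetI)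
  moreover have "X1 \<times> Y' \<subseteq> E" using assms(3) unfolding X1_def by auto
  moreover have "(X2 \<times> Y') \<inter> E = {}" using assms(3) unfolding X1_def X2_def by auto
  moreover have "X1 \<subseteq> X0" "X2 \<subseteq> X0" unfolding X1_def X2_def by auto
  ultimately show ?thesis
    by (metis add_le_mono le_add2 linorder_le_cases mult_2)
qed

lemma arithA2:
  fixes m N :: nat
  assumes "N \<ge> 1" "m > 2^(N+4)"
  shows "m \<le> (m div (2*N)) * 2^(N+4)" and "m div (2*N) \<ge> 1"
proof -
  define K where "K = 2*N"
  define T :: nat where "T = 2^(N+4)"
  define s where "s = m div K"
  have KT: "2 * K \<le> T" using fourN[of N] unfolding K_def T_def by simp
  have Kpos: "K > 0" using assms unfolding K_def by simp
  have "m < s * K + K" unfolding s_def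
    using Kpos by (metis add.commute div_mult_mod_eq mod_less_divisor nat_add_left_cancel_less)
  have "m \<ge> K" using KT assms(2) unfolding T_def by simp
  then have s1: "s \<ge> 1" unfolding s_def using Kpos by (simp add: div_le_mono div_self[symmetric] less_eq_div_iff_mult_less_eq)
  have "s * K + K \<le> s * T"
  proof -
    have "s * K + K \<le> s * K + s * K" using s1 by simp
    also have "\<dots> = s * (2*K)" by simp
    also have "\<dots> \<le> s * T" using KT by simp
    finally show ?thesis .
  qed
  then show "m \<le> (m div (2*N)) * 2^(N+4)" using \<open>m < s * K + K\<close> unfolding s_def K_def T_def by simp
  show "m div (2*N) \<ge> 1" using s1 unfolding s_def K_def .
qed

lemma cheese_cong:
  assumes "c \<noteq> []" "\<forall>B\<in>set c. (y \<in> B \<longleftrightarrow> y' \<in> B)"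
  shows "y \<in> cheese c \<longleftrightarrow> y' \<in> cheese c"
proof -
  have "hd c \<in> set c" using assms(1) by simp
  moreover have "set (tl c) \<subseteq> set c" using assms(1) by (cases c) auto
  ultimately show ?thesis using assms(2) unfolding cheese_def by blast
qed

lemma sum_len_concat: "length (concat cs) = (\<Sum>i<length cs. length (cs!i))"
proof -
  have "length (concat cs) = sum_list (map length cs)" by (simp add: length_concat)
  also have "\<dots> = (\<Sum>i = 0..<length (map length cs). (map length cs) ! i)" by (rule sum_list_sum_nth)
  also have "\<dots> = (\<Sum>i<length cs. length (cs!i))" by (simp add: lessThan_atLeast0)
  finally show ?thesis .
qed

theorem theorem3p1:
  fixes X :: "'a set" and Y :: "'b set" and E :: "('a \<times> 'b) set" and N :: nat
  assumes "N \<ge> 1"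
    and "finite X" and "finite Y" and "E \<subseteq> X \<times> Y"
    and "vc_minimal_complexity_lt X Y E N"
  shows "\<exists>X' Y'. X' \<subseteq> X \<and> Y' \<subseteq> Y \<and>
           real (card X') \<ge> (1 / 2 ^ (N + 4)) * real (card X) \<and>
           real (card Y') \<ge> (1 / 2 ^ (N + 4)) * real (card Y) \<and>
           (X' \<times> Y' \<subseteq> E \<or> (X' \<times> Y') \<inter> E = {})"
proof -
  define T :: nat where "T = 2^(N+4)"
  have T2: "2 \<le> T" unfolding T_def using fourN[of N] assms(1) by linarith
  have T4N: "4 * N \<le> T" unfolding T_def by (rule fourN)
  obtain \<Psi> where dir: "directed_family Y \<Psi>" and
    hcs: "\<forall>a\<in>X. \<exists>cs :: 'b set list list.
          (\<forall>c\<in>set cs. c \<noteq> [] \<and> set c \<subseteq> \<Psi>) \<and>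
          (\<forall>i<length cs. \<forall>j<length cs. i \<noteq> j \<longrightarrow> cheese (cs!i) \<inter> cheese (cs!j) = {}) \<and>
          nbhd E a Y = (\<Union>i<length cs. cheese (cs!i)) \<and>
          (\<Sum>i<length cs. length (cs!i)) < N"
    using assms(5) unfolding vc_minimal_complexity_lt_def by blast
  have lam: "\<forall>B\<in>\<Psi>. \<forall>B'\<in>\<Psi>. B \<subseteq> B' \<or> B' \<subseteq> B \<or> B \<inter> B' = {}"
    using dir unfolding directed_family_def by blast
  from bchoice[OF hcs] obtain CS where CS: "\<forall>a\<in>X.
          (\<forall>c\<in>set (CS a). c \<noteq> [] \<and> set c \<subseteq> \<Psi>) \<and>
          (\<forall>i<length (CS a). \<forall>j<length (CS a). i \<noteq> j \<longrightarrow> cheese (CS a!i) \<inter> cheese (CS a!j) = {}) \<and>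
          nbhd E a Y = (\<Union>i<length (CS a). cheese (CS a!i)) \<and>
          (\<Sum>i<length (CS a). length (CS a!i)) < N" by blast
  define S where "S a = set (concat (CS a))" for a
  have Sfin: "finite (S a)" for a unfolding S_def by simp
  have Scard: "card (S a) + 1 \<le> N" if "a \<in> X" for a
  proof -
    have "card (S a) \<le> length (concat (CS a))" unfolding S_def by (rule card_length)
    also have "\<dots> = (\<Sum>i<length (CS a). length (CS a!i))" by (rule sum_len_concat)
    finally show ?thesis using CS that by fastforce
  qed
  have Scong: "(a,y) \<in> E \<longleftrightarrow> (a,y') \<in> E"
    if a: "a \<in> X" and yy: "y \<in> Y" "y' \<in> Y" and same: "\<forall>B\<in>S a. (y \<in> B \<longleftrightarrow> y' \<in> B)" for a y y'
  proof -
    have nb: "nbhd E a Y = (\<Union>i<length (CS a). cheese (CS a!i))" using CS a by blast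
    have ne: "\<forall>c\<in>set (CS a). c \<noteq> []" using CS a by blast
    have eq: "y \<in> cheese (CS a!i) \<longleftrightarrow> y' \<in> cheese (CS a!i)" if "i < length (CS a)" for i
    proof (rule cheese_cong)
      show "CS a ! i \<noteq> []" using ne that by simp
      show "\<forall>B\<in>set (CS a ! i). (y \<in> B \<longleftrightarrow> y' \<in> B)" using same that unfolding S_def by auto
    qed
    have "(a,y) \<in> E \<longleftrightarrow> y \<in> nbhd E a Y" using yy unfolding nbhd_def by simp
    also have "\<dots> \<longleftrightarrow> y' \<in> nbhd E a Y" unfolding nb using eq by blast
    also have "\<dots> \<longleftrightarrow> (a,y') \<in> E" using yy unfolding nbhd_def by simp
    finally show ?thesis .
  qed
  show ?thesis
  proof (cases "card Y \<le> T")
    case True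
    show ?thesis
    proof (cases "Y = {}")
      case True
      have "(1 / 2 ^ (N + 4)) * real (card X) \<le> real (card X)"
        using realfrac[of "card X" N "card X"] by simp
      then show ?thesis using True by (intro exI[of _ X] exI[of _ "{}"]) simp
    next
      case False
      then obtain y1 where y1: "y1 \<in> Y" by blast
      obtain X' where X': "X' \<subseteq> X" "card X \<le> 2 * card X'" "X' \<times> {y1} \<subseteq> E \<or> (X' \<times> {y1}) \<inter> E = {}"
        using halving[of X y1 "{y1}" E] assms(2) by auto
      have "card X \<le> T * card X'" using X'(2) T2 by (meson le_trans mult_le_mono1)
      then have c1: "(1 / 2 ^ (N + 4)) * real (card X) \<le> real (card X')"
        using realfrac unfolding T_def by blast
      have "card Y \<le> T * card {y1}" using \<open>card Y \<le> T\<close> by simp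
      then have c2: "(1 / 2 ^ (N + 4)) * real (card Y) \<le> real (card {y1})"
        using realfrac unfolding T_def by blast
      show ?thesis using X' c1 c2 y1 by (intro exI[of _ X'] exI[of _ "{y1}"]) auto
    qed
  next
    case False
    define m where "m = card Y"
    define K where "K = 2 * N"
    define s where "s = m div K"
    have mT: "m > 2^(N+4)" using False unfolding m_def T_def by simp
    have msT: "m \<le> s * T" and s1: "s \<ge> 1"
      using arithA2[OF assms(1) mT] unfolding s_def K_def T_def by auto
    have Ks: "K * s \<le> m" unfolding s_def by simp
    obtain f :: "'b \<Rightarrow> int" where finj: "inj_on f Y" and
      fconv: "\<forall>B\<in>\<Psi>. \<forall>x\<in>B\<inter>Y. \<forall>z\<in>B\<inter>Y. \<forall>y\<in>Y. f x \<le> f y \<longrightarrow> f y \<le> f z \<longrightarrow> y \<in> B"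
      using laminar_order[OF assms(3) lam] by blast
    define r where "r y = card {z\<in>Y. f z < f y}" for y
    have rlt: "r x < r y" if "x \<in> Y" "y \<in> Y" "f x < f y" for x y
    proof -
      have "{z\<in>Y. f z < f x} \<subset> {z\<in>Y. f z < f y}" using that by auto
      then show ?thesis unfolding r_def using assms(3) by (simp add: psubset_card_mono)
    qed
    have rmono: "f x \<le> f y \<longleftrightarrow> r x \<le> r y" if "x \<in> Y" "y \<in> Y" for x y
    proof -
      consider "f x < f y" | "f y < f x" | "f x = f y" using not_less_iff_gr_or_eq by blast
      then show ?thesis
      proof cases
        case 1 then show ?thesis using rlt[OF that] by simp
      next
        case 2 then show ?thesis using rlt[OF that(2,1)] by simp
      next
        case 3 then have "x = y" using finj that by (simp add: inj_on_def)
        then show ?thesis by simp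
      qed
    qed
    have rinj: "inj_on r Y"
    proof (rule inj_onI)
      fix x y assume "x \<in> Y" "y \<in> Y" "r x = r y"
      then have "f x \<le> f y" "f y \<le> f x" using rmono[of x y] rmono[of y x] by simp_all
      then have "f x = f y" by simp
      then show "x = y" using finj \<open>x \<in> Y\<close> \<open>y \<in> Y\<close> by (simp add: inj_on_def)
    qed
    have rbound: "r y < m" if "y \<in> Y" for y
    proof -
      have "{z\<in>Y. f z < f y} \<subset> Y" using that by auto
      then show ?thesis unfolding r_def m_def using assms(3) by (simp add: psubset_card_mono)
    qed
    have rimg: "r ` Y = {..<m}"
    proof -
      have "r ` Y \<subseteq> {..<m}" using rbound by auto
      moreover have "card (r ` Y) = card {..<m}" using card_image[OF rinj] unfolding m_def by simp
      ultimately show ?thesis by (simp add: card_subset_eq)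
    qed
    have rconv: "y \<in> B" if "B \<in> \<Psi>" "x \<in> B" "x \<in> Y" "z \<in> B" "z \<in> Y" "y \<in> Y" "r x \<le> r y" "r y \<le> r z" for B x y z
    proof -
      have "f x \<le> f y" using rmono[of x y] that by simp
      moreover have "f y \<le> f z" using rmono[of y z] that by simp
      ultimately show ?thesis using fconv[rule_format, of B x z y] that by blast
    qed
    define P where "P j = {y\<in>Y. r y div s = j}" for j
    have spos: "s > 0" using s1 by simp
    have Pcard: "card (P j) = s" if "j < K" for j
    proof -
      have "j * s + s \<le> K * s" using that by (metis Suc_leI add.commute mult_Suc mult_le_mono1)
      then have jm: "j * s + s \<le> m" using Ks by (simp add: mult.commute)
      have "r ` P j = {j*s..<j*s+s}"
      proof
        show "r ` P j \<subseteq> {j*s..<j*s+s}"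
        proof
          fix i assume "i \<in> r ` P j"
          then obtain y where "y \<in> Y" "r y div s = j" "i = r y" unfolding P_def by auto
          then show "i \<in> {j*s..<j*s+s}" using div_range[OF spos, of i j] by simp
        qed
        show "{j*s..<j*s+s} \<subseteq> r ` P j"
        proof
          fix i assume i: "i \<in> {j*s..<j*s+s}"
          then have "i \<in> r ` Y" using rimg jm by auto
          then obtain y where "y \<in> Y" "i = r y" by auto
          moreover have "i div s = j" using i div_range[OF spos, of i j] by simp
          ultimately show "i \<in> r ` P j" unfolding P_def by auto
        qed
      qed
      then have "card (r ` P j) = s" by simp
      moreover have "inj_on r (P j)" using rinj unfolding P_def by (rule inj_on_subset) auto
      ultimately show ?thesis using card_image by metis
    qed
    define cut where "cut j B = (P j \<inter> B \<noteq> {} \<and> \<not> P j \<subseteq> B)" for j B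
    have Jcard: "card {j. j < K \<and> cut j B} \<le> 2" if B: "B \<in> \<Psi>" for B
    proof (cases "B \<inter> Y = {}")
      case True
      then have "{j. j < K \<and> cut j B} = {}" unfolding cut_def P_def by auto
      then show ?thesis by (metis card.empty le0)
    next
      case False
      have finBY: "finite (r ` (B \<inter> Y))" using assms(3) by simp
      have neBY: "r ` (B \<inter> Y) \<noteq> {}" using False by simp
      obtain x0 where x0: "x0 \<in> B \<inter> Y" "r x0 = Min (r ` (B \<inter> Y))"
        using Min_in[OF finBY neBY] by auto
      obtain z0 where z0: "z0 \<in> B \<inter> Y" "r z0 = Max (r ` (B \<inter> Y))"
        using Max_in[OF finBY neBY] by auto
      have "{j. j < K \<and> cut j B} \<subseteq> {r x0 div s, r z0 div s}"
      proof
        fix j assume "j \<in> {j. j < K \<and> cut j B}"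
        then obtain y w where y: "y \<in> Y" "r y div s = j" "y \<in> B" and w: "w \<in> Y" "r w div s = j" "w \<notin> B"
          unfolding cut_def P_def by auto
        show "j \<in> {r x0 div s, r z0 div s}"
        proof (rule ccontr)
          assume nj: "j \<notin> {r x0 div s, r z0 div s}"
          have "r x0 \<le> r y" using x0 y finBY by simp
          then have "r x0 div s \<le> j" using y by (metis div_le_mono)
          then have "r x0 div s < r w div s" using nj w by auto
          then have lw: "r x0 \<le> r w" by (metis div_le_mono linorder_not_le order.asym)
          have "r y \<le> r z0" using z0 y finBY by simp
          then have "j \<le> r z0 div s" using y by (metis div_le_mono)
          then have "r w div s < r z0 div s" using nj w by auto
          then have wz: "r w \<le> r z0" by (metis div_le_mono linorder_not_le order.asym)
          have "w \<in> B" using rconv[OF B _ _ _ _ w(1) lw wz] x0 z0 by blast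
          then show False using w by simp
        qed
      qed
      then have "card {j. j < K \<and> cut j B} \<le> card {r x0 div s, r z0 div s}"
        by (rule card_mono[rotated]) simp
      also have "\<dots> \<le> 2" by (simp add: card_insert_le_m1)
      finally show ?thesis .
    qed
    have goodj: "\<exists>j<K. \<forall>B\<in>S a. \<not> cut j B" if a: "a \<in> X" for a
    proof -
      define J where "J = (\<Union>B\<in>S a. {j. j < K \<and> cut j B})"
      have "card J \<le> (\<Sum>B\<in>S a. card {j. j < K \<and> cut j B})" unfolding J_def by (rule card_UN_le[OF Sfin])
      also have "\<dots> \<le> (\<Sum>B\<in>S a. 2)"
      proof (rule sum_mono)
        fix B assume "B \<in> S a"
        then obtain c where "c \<in> set (CS a)" "B \<in> set c" unfolding S_def by auto
        moreover have "\<forall>c\<in>set (CS a). set c \<subseteq> \<Psi>" using CS a by blast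
        ultimately have "B \<in> \<Psi>" by blast
        then show "card {j. j < K \<and> cut j B} \<le> 2" by (rule Jcard)
      qed
      also have "\<dots> = 2 * card (S a)" by simp
      also have "\<dots> < K" using Scard[OF a] unfolding K_def by simp
      finally have "card J < card {..<K}" by simp
      have Jsub: "J \<subseteq> {..<K}" unfolding J_def by auto
      have "\<not> {..<K} \<subseteq> J"
      proof
        assume "{..<K} \<subseteq> J"
        then have "J = {..<K}" using Jsub by blast
        then show False using \<open>card J < card {..<K}\<close> by simp
      qed
      then obtain j where "j < K" "j \<notin> J" by auto
      then show ?thesis unfolding J_def by auto
    qed
    then have "\<forall>a\<in>X. \<exists>j. j < K \<and> (\<forall>B\<in>S a. \<not> cut j B)" by blast
    from bchoice[OF this] obtain c where c: "\<forall>a\<in>X. c a < K \<and> (\<forall>B\<in>S a. \<not> cut (c a) B)" by blast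
    define Xj where "Xj j = {a\<in>X. c a = j}" for j
    have Kpos: "K > 0" unfolding K_def using assms(1) by simp
    have finXj: "finite (Xj j)" for j using assms(2) unfolding Xj_def by simp
    obtain jm where jm: "jm < K" "\<forall>j<K. card (Xj j) \<le> card (Xj jm)"
    proof -
      have fin: "finite ((\<lambda>j. card (Xj j)) ` {..<K})" by simp
      have ne: "(\<lambda>j. card (Xj j)) ` {..<K} \<noteq> {}" using Kpos by auto
      obtain jm where "jm < K" "card (Xj jm) = Max ((\<lambda>j. card (Xj j)) ` {..<K})"
        using Max_in[OF fin ne] by auto
      then show ?thesis using that fin by auto
    qed
    have "X = (\<Union>j<K. Xj j)" unfolding Xj_def using c by auto
    then have "card X = card (\<Union>j<K. Xj j)" by simp
    also have "\<dots> \<le> (\<Sum>j<K. card (Xj j))" by (rule card_UN_le) simp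
    also have "\<dots> \<le> (\<Sum>j<K. card (Xj jm))" using jm(2) by (intro sum_mono) auto
    also have "\<dots> = K * card (Xj jm)" by simp
    finally have cardXjm: "card X \<le> K * card (Xj jm)" .
    have Pne: "P jm \<noteq> {}" using Pcard[OF jm(1)] spos by auto
    then obtain y1 where y1: "y1 \<in> P jm" by auto
    have PY: "P jm \<subseteq> Y" unfolding P_def by auto
    have hom: "\<forall>a\<in>Xj jm. \<forall>y\<in>P jm. (a,y) \<in> E \<longleftrightarrow> (a,y1) \<in> E"
    proof (intro ballI)
      fix a y assume a: "a \<in> Xj jm" and y: "y \<in> P jm"
      have aX: "a \<in> X" and ca: "c a = jm" using a unfolding Xj_def by auto
      have "\<forall>B\<in>S a. (y \<in> B \<longleftrightarrow> y1 \<in> B)"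
      proof
        fix B assume "B \<in> S a"
        then have "\<not> cut jm B" using c aX ca by auto
        then show "y \<in> B \<longleftrightarrow> y1 \<in> B" using y y1 unfolding cut_def by blast
      qed
      then show "(a,y) \<in> E \<longleftrightarrow> (a,y1) \<in> E" using Scong[OF aX] y y1 PY by blast
    qed
    obtain X' where X': "X' \<subseteq> Xj jm" "card (Xj jm) \<le> 2 * card X'" "X' \<times> P jm \<subseteq> E \<or> (X' \<times> P jm) \<inter> E = {}"
      using halving[OF finXj y1 hom] by blast
    have "card X \<le> K * (2 * card X')" using cardXjm X'(2) by (meson le_trans mult_le_mono2)
    also have "\<dots> = (4 * N) * card X'" unfolding K_def by simp
    also have "\<dots> \<le> T * card X'" using T4N by simp
    finally have c1: "(1 / 2 ^ (N + 4)) * real (card X) \<le> real (card X')"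
      using realfrac unfolding T_def by blast
    have "card Y \<le> T * card (P jm)" using msT Pcard[OF jm(1)] unfolding m_def by (simp add: mult.commute)
    then have c2: "(1 / 2 ^ (N + 4)) * real (card Y) \<le> real (card (P jm))"
      using realfrac unfolding T_def by blast
    have "X' \<subseteq> X" using X'(1) unfolding Xj_def by auto
    then show ?thesis using X'(3) c1 c2 PY by (intro exI[of _ X'] exI[of _ "P jm"]) auto
  qed
qed


end
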